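(* Consider an asynchronous execution of the Arrow protocol for a set of requests $R$ on a tree $T$, extended by virtual broadcast messages, with requests indexed $r_0,r_1,\dots$ in the resulting queueing order. For any two requests $r_i,r_j$ with $1\le i<j$ and any node $v$ on the tree path from $v_i$ to $v_{i-1}$, it holds that $t_i+\Delta(r_i,v)\le t_j+\Delta(r_j,v)$.
   Context: Requests $r_i=(v_i,t_i)$ are issued at node $v_i$ at time $t_i\ge0$; $r_0=(v_0,0)$ is a dummy request. Arrow protocol on a weighted tree $T$: each node $u$ has a pointer $\mathrm{link}(u)$ (itself or a neighbour), initially pointing towards $v_0$ with $\mathrm{link}(v_0)=v_0$. When $r$ is issued at $v$: if $\mathrm{link}(v)=v$, $r$ is queued behind the previous request at $v$; otherwise atomically $\mathrm{find}(r)$ ("find predecessor") is sent to $\mathrm{link}(v)$ and $\mathrm{link}(v):=v$. When $u$ receives $\mathrm{find}(r)$ from $w$: if $\mathrm{link}(u)=u$, atomically $r$ is queued behind the last request issued at $u$ and $\mathrm{link}(u):=w$; otherwise it is atomically forwarded to $\mathrm{link}(u)$ and $\mathrm{link}(u):=w$. Asynchronous: each message delay over edge $e$ is at most the weight $w(e)$. Virtual extension: for analysis, the "find predecessor" message of each request is additionally broadcast to the whole tree by virtual messages that do not influence the protocol; real messages keep their delays, every virtual message over edge $e$ has delay exactly $w(e)$, and when a real and a virtual message reach a node at the same time, the real one is processed first. For a request $r$ and node $u$, $\Delta(r,u)$ denotes the time the "find predecessor" message of $r$ needs (from its issue) to reach node $u$. *)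

theory Defs
  imports Main "HOL.Real"
begin

definition is_path :: "('v \<Rightarrow> 'v \<Rightarrow> bool) \<Rightarrow> 'v list \<Rightarrow> 'v \<Rightarrow> 'v \<Rightarrow> bool" where
  "is_path E p u w \<longleftrightarrow> p \<noteq> [] \<and> hd p = u \<and> last p = w \<and> distinct p \<and>
     (\<forall>i. Suc i < length p \<longrightarrow> E (p ! i) (p ! Suc i))"

definition is_tree :: "'v set \<Rightarrow> ('v \<Rightarrow> 'v \<Rightarrow> bool) \<Rightarrow> bool" where
  "is_tree V E \<longleftrightarrow> finite V \<and> V \<noteq> {} \<and>
     (\<forall>u w. E u w \<longrightarrow> u \<in> V \<and> w \<in> V \<and> u \<noteq> w \<and> E w u) \<and>
     (\<forall>u\<in>V. \<forall>w\<in>V. \<exists>!p. is_path E p u w)"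

definition weighted :: "('v \<Rightarrow> 'v \<Rightarrow> bool) \<Rightarrow> ('v \<Rightarrow> 'v \<Rightarrow> real) \<Rightarrow> bool" where
  "weighted E wt \<longleftrightarrow> (\<forall>u w. E u w \<longrightarrow> wt u w > 0 \<and> wt u w = wt w u)"

definition tpath :: "('v \<Rightarrow> 'v \<Rightarrow> bool) \<Rightarrow> 'v \<Rightarrow> 'v \<Rightarrow> 'v list" where
  "tpath E u w = (THE p. is_path E p u w)"

definition tdist :: "('v \<Rightarrow> 'v \<Rightarrow> bool) \<Rightarrow> ('v \<Rightarrow> 'v \<Rightarrow> real) \<Rightarrow> 'v \<Rightarrow> 'v \<Rightarrow> real" where
  "tdist E wt u w = (let p = tpath E u w in sum_list (map (\<lambda>(a,b). wt a b) (zip p (tl p))))"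

(* Requests are indexed by nat: request k is issued at node vr k at time tr k;
   request 0 is the dummy request (v0,0).
   State: link pointers, the last request issued at each node,
   the predecessor assigned to each request (queueing), and the real
   "find predecessor" messages in transit, as tuples
   (request, sender, receiver, sending time). *)
record 'v st =
  lnk  :: "'v \<Rightarrow> 'v"
  lastq :: "'v \<Rightarrow> nat"
  prd  :: "nat \<Rightarrow> nat option"
  msgs :: "(nat \<times> 'v \<times> 'v \<times> real) set"

(* processing events: issue of request k (at time tr k), or
   Recv k u w \<tau>: node u receives (and atomically processes) find(r_k) from w at time \<tau> *)
datatype 'v event = Issue nat | Recv nat 'v 'v real

fun ev_time :: "(nat \<Rightarrow> real) \<Rightarrow> 'v event \<Rightarrow> real" where
  "ev_time tr (Issue k) = tr k"
| "ev_time tr (Recv k u w \<tau>) = \<tau>"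

(* one atomic step; None = event not enabled (no matching message in transit
   delivered within the delay bound) *)
fun step :: "('v \<Rightarrow> 'v \<Rightarrow> real) \<Rightarrow> (nat \<Rightarrow> 'v) \<Rightarrow> (nat \<Rightarrow> real) \<Rightarrow> 'v st \<Rightarrow> 'v event \<Rightarrow> 'v st option" where
  "step wt vr tr \<sigma> (Issue k) =
     (let v = vr k in
      if lnk \<sigma> v = v then
        Some (\<sigma>\<lparr>prd := (prd \<sigma>)(k := Some (lastq \<sigma> v)), lastq := (lastq \<sigma>)(v := k)\<rparr>)
      else
        Some (\<sigma>\<lparr>msgs := insert (k, v, lnk \<sigma> v, tr k) (msgs \<sigma>),
                lnk := (lnk \<sigma>)(v := v), lastq := (lastq \<sigma>)(v := k)\<rparr>))"
| "step wt vr tr \<sigma> (Recv k u w \<tau>) =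
     (if \<exists>s. (k, w, u, s) \<in> msgs \<sigma> \<and> s \<le> \<tau> \<and> \<tau> \<le> s + wt w u then
        (let s = (SOME s. (k, w, u, s) \<in> msgs \<sigma> \<and> s \<le> \<tau> \<and> \<tau> \<le> s + wt w u);
             M = msgs \<sigma> - {(k, w, u, s)} in
         if lnk \<sigma> u = u then
           Some (\<sigma>\<lparr>msgs := M, prd := (prd \<sigma>)(k := Some (lastq \<sigma> u)), lnk := (lnk \<sigma>)(u := w)\<rparr>)
         else
           Some (\<sigma>\<lparr>msgs := insert (k, u, lnk \<sigma> u, \<tau>) M, lnk := (lnk \<sigma>)(u := w)\<rparr>))
      else None)"

fun run :: "('v \<Rightarrow> 'v \<Rightarrow> real) \<Rightarrow> (nat \<Rightarrow> 'v) \<Rightarrow> (nat \<Rightarrow> real) \<Rightarrow> 'v st \<Rightarrow> 'v event list \<Rightarrow> 'v st option" where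
  "run wt vr tr \<sigma> [] = Some \<sigma>"
| "run wt vr tr \<sigma> (e # es) =
     (case step wt vr tr \<sigma> e of None \<Rightarrow> None | Some \<sigma>' \<Rightarrow> run wt vr tr \<sigma>' es)"

definition init_st :: "('v \<Rightarrow> 'v \<Rightarrow> bool) \<Rightarrow> 'v \<Rightarrow> 'v st" where
  "init_st E v0 = \<lparr>lnk = (\<lambda>u. if u = v0 then v0 else tpath E u v0 ! 1),
                   lastq = (\<lambda>_. 0), prd = (\<lambda>_. None), msgs = {}\<rparr>"

(* a complete asynchronous execution for the requests 1..n, as the list of
   processing events in processing order (times non-decreasing), each request
   issued exactly once at its issue time, all messages delivered within their
   delay bound, and no message left in transit; \<sigma> is the final state *)
definition arrow_exec ::
  "('v \<Rightarrow> 'v \<Rightarrow> bool) \<Rightarrow> ('v \<Rightarrow> 'v \<Rightarrow> real) \<Rightarrow> 'v \<Rightarrow> nat \<Rightarrow> (nat \<Rightarrow> 'v) \<Rightarrow> (nat \<Rightarrow> real)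
     \<Rightarrow> 'v event list \<Rightarrow> 'v st \<Rightarrow> bool" where
  "arrow_exec E wt v0 n vr tr evs \<sigma> \<longleftrightarrow>
     run wt vr tr (init_st E v0) evs = Some \<sigma> \<and> msgs \<sigma> = {} \<and>
     sorted (map (ev_time tr) evs) \<and>
     (\<forall>k. length (filter (\<lambda>e. e = Issue k) evs) = (if 1 \<le> k \<and> k \<le> n then 1 else 0))"

definition real_arr :: "'v event list \<Rightarrow> (nat \<Rightarrow> 'v) \<Rightarrow> (nat \<Rightarrow> real) \<Rightarrow> nat \<Rightarrow> 'v \<Rightarrow> real set" where
  "real_arr evs vr tr k u =
     {\<tau>. \<exists>w. Recv k u w \<tau> \<in> set evs} \<union> (if u = vr k then {tr k} else {})"

(* \<Delta>(r_k,u): on the route of the real message, its arrival time; elsewhere the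
   arrival of the virtual broadcast copies, which leave each node p of the real
   route when the real message is there and travel with delay exactly w(e) per
   edge, i.e. arrive first at time (arrival at p) + tree distance(p,u);
   minus the issue time *)
definition Delta ::
  "('v \<Rightarrow> 'v \<Rightarrow> bool) \<Rightarrow> ('v \<Rightarrow> 'v \<Rightarrow> real) \<Rightarrow> 'v event list \<Rightarrow> (nat \<Rightarrow> 'v) \<Rightarrow> (nat \<Rightarrow> real)
     \<Rightarrow> nat \<Rightarrow> 'v \<Rightarrow> real" where
  "Delta E wt evs vr tr k u =
     (if real_arr evs vr tr k u \<noteq> {} then Min (real_arr evs vr tr k u)
      else Min {Min (real_arr evs vr tr k p) + tdist E wt p u | p. real_arr evs vr tr k p \<noteq> {}})
     - tr k"

end

theory Submission
  imports Defs
begin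

definition ch :: "('v \<Rightarrow> 'v \<Rightarrow> bool) \<Rightarrow> 'v list \<Rightarrow> bool" where
  "ch E p \<longleftrightarrow> (\<forall>i. Suc i < length p \<longrightarrow> E (p ! i) (p ! Suc i))"

lemma ch_Nil[simp]: "ch E []" by (simp add: ch_def)
lemma ch_single[simp]: "ch E [x]" by (simp add: ch_def)

lemma ch_Cons: "ch E (x # p) \<longleftrightarrow> (p \<noteq> [] \<longrightarrow> E x (hd p)) \<and> ch E p"
proof
  assume h: "ch E (x # p)"
  have "ch E p" unfolding ch_def
  proof (intro allI impI)
    fix i assume "Suc i < length p"
    with h[unfolded ch_def, rule_format, of "Suc i"] show "E (p ! i) (p ! Suc i)" by simp
  qed
  moreover have "p \<noteq> [] \<longrightarrow> E x (hd p)"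
    using h[unfolded ch_def, rule_format, of 0] by (cases p) auto
  ultimately show "(p \<noteq> [] \<longrightarrow> E x (hd p)) \<and> ch E p" by blast
next
  assume h: "(p \<noteq> [] \<longrightarrow> E x (hd p)) \<and> ch E p"
  show "ch E (x # p)" unfolding ch_def
  proof (intro allI impI)
    fix i assume i: "Suc i < length (x # p)"
    show "E ((x # p) ! i) ((x # p) ! Suc i)"
    proof (cases i)
      case 0 then show ?thesis using h i by (cases p) auto
    next
      case (Suc i') then show ?thesis using h i by (auto simp: ch_def)
    qed
  qed
qed

lemma ch_append: "ch E (p @ q) \<longleftrightarrow> ch E p \<and> ch E q \<and> (p \<noteq> [] \<and> q \<noteq> [] \<longrightarrow> E (last p) (hd q))"
  by (induction p) (auto simp: ch_Cons)

lemma ch_take: "ch E p \<Longrightarrow> ch E (take k p)"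
  using ch_append[of E "take k p" "drop k p"] by simp

lemma ch_drop: "ch E p \<Longrightarrow> ch E (drop k p)"
  using ch_append[of E "take k p" "drop k p"] by simp

lemma ch_rev: "(\<And>a b. E a b \<Longrightarrow> E b a) \<Longrightarrow> ch E p \<Longrightarrow> ch E (rev p)"
  by (induction p) (auto simp: ch_Cons ch_append hd_rev last_rev)

lemma is_path_ch: "is_path E p u w \<longleftrightarrow> p \<noteq> [] \<and> hd p = u \<and> last p = w \<and> distinct p \<and> ch E p"
  by (simp add: is_path_def ch_def)

lemma walk_to_path:
  assumes "p \<noteq> []" "ch E p"
  shows "\<exists>q. is_path E q (hd p) (last p) \<and> set q \<subseteq> set p"
  using assms
proof (induction p)
  case Nil then show ?case by simp
next
  case (Cons x p)
  show ?case
  proof (cases "p = []")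
    case True then show ?thesis by (auto simp: is_path_ch)
  next
    case False
    then have "ch E p" "E x (hd p)" using Cons.prems by (auto simp: ch_Cons)
    with Cons.IH False obtain q where q: "is_path E q (hd p) (last p)" "set q \<subseteq> set p" by blast
    show ?thesis
    proof (cases "x \<in> set q")
      case True
      then obtain q1 q2 where qs: "q = q1 @ x # q2" by (meson split_list)
      have "is_path E (x # q2) x (last q)"
        using q(1) unfolding is_path_ch qs
        by (auto simp: ch_append)
      moreover have "last (x # q2) = last p" using q(1) qs by (auto simp: is_path_ch)
      ultimately show ?thesis using q False qs by (auto intro!: exI[of _ "x # q2"])
    next
      case False': False
      have "is_path E (x # q) x (last q)"
        using q(1) False' \<open>E x (hd p)\<close> unfolding is_path_ch by (auto simp: ch_Cons)
      moreover have "last q = last p" using q(1) by (simp add: is_path_ch)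
      ultimately show ?thesis using q False by (auto intro!: exI[of _ "x # q"])
    qed
  qed
qed

definition wsum :: "('v \<Rightarrow> 'v \<Rightarrow> real) \<Rightarrow> 'v list \<Rightarrow> real" where
  "wsum wt p = sum_list (map (\<lambda>(a,b). wt a b) (zip p (tl p)))"

lemma wsum_Nil[simp]: "wsum wt [] = 0" by (simp add: wsum_def)
lemma wsum_single[simp]: "wsum wt [x] = 0" by (simp add: wsum_def)
lemma wsum_Cons2[simp]: "wsum wt (x # y # p) = wt x y + wsum wt (y # p)" by (simp add: wsum_def)

lemma wsum_split: "i < length p \<Longrightarrow> wsum wt p = wsum wt (take (Suc i) p) + wsum wt (drop i p)"
proof (induction p arbitrary: i)
  case Nil then show ?case by simp
next
  case (Cons x p)
  show ?case
  proof (cases i)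
    case 0 then show ?thesis by simp
  next
    case (Suc i')
    then obtain y p' where p: "p = y # p'" using Cons.prems by (cases p) auto
    have "wsum wt p = wsum wt (take (Suc i') p) + wsum wt (drop i' p)" using Cons Suc by simp
    then show ?thesis using Suc p by (cases i') auto
  qed
qed

lemma wsum_nonneg: "(\<And>a b. E a b \<Longrightarrow> wt a b > 0) \<Longrightarrow> ch E p \<Longrightarrow> wsum wt p \<ge> 0"
proof (induction p)
  case Nil then show ?case by simp
next
  case (Cons x p)
  show ?case
  proof (cases p)
    case Nil then show ?thesis by simp
  next
    case (Cons a l)
    then have "E x a" "ch E p" using Cons.prems by (auto simp: ch_Cons)
    then have "wt x a > 0" "wsum wt p \<ge> 0" using Cons.prems Cons.IH by auto
    then show ?thesis using \<open>p = a # l\<close> by simp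
  qed
qed

lemma tdist_wsum: "tdist E wt u w = wsum wt (tpath E u w)"
  by (simp add: tdist_def wsum_def Let_def)

locale tree_ctx =
  fixes V :: "'v set" and E :: "'v \<Rightarrow> 'v \<Rightarrow> bool"
  assumes tree: "is_tree V E"
begin

lemma E_V: "E u w \<Longrightarrow> u \<in> V \<and> w \<in> V" using tree by (auto simp: is_tree_def)
lemma E_sym: "E u w \<Longrightarrow> E w u" using tree by (auto simp: is_tree_def)
lemma E_irr: "E u w \<Longrightarrow> u \<noteq> w" using tree by (auto simp: is_tree_def)

lemma ex1_path: "u \<in> V \<Longrightarrow> w \<in> V \<Longrightarrow> \<exists>!p. is_path E p u w"
  using tree by (auto simp: is_tree_def)

lemma tpath_path: "u \<in> V \<Longrightarrow> w \<in> V \<Longrightarrow> is_path E (tpath E u w) u w"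
  unfolding tpath_def using ex1_path by (rule theI')

lemma tpath_eq: "u \<in> V \<Longrightarrow> w \<in> V \<Longrightarrow> is_path E p u w \<Longrightarrow> tpath E u w = p"
  unfolding tpath_def using ex1_path by (rule the1_equality)

lemma ch_set_V:
  assumes "ch E p" "p \<noteq> []" "hd p \<in> V" shows "set p \<subseteq> V"
proof
  fix x assume "x \<in> set p"
  then obtain i where i: "i < length p" "p ! i = x" by (auto simp: in_set_conv_nth)
  show "x \<in> V"
  proof (cases i)
    case 0 then show ?thesis using assms i by (simp add: hd_conv_nth)
  next
    case (Suc i') then show ?thesis using assms i E_V by (auto simp: ch_def)
  qed
qed

lemma path_set_V: "is_path E p u w \<Longrightarrow> u \<in> V \<Longrightarrow> set p \<subseteq> V"
  using ch_set_V by (auto simp: is_path_ch)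

lemma tpath_set_V: "u \<in> V \<Longrightarrow> w \<in> V \<Longrightarrow> set (tpath E u w) \<subseteq> V"
  using path_set_V tpath_path by blast

lemma tpath_refl: "u \<in> V \<Longrightarrow> tpath E u u = [u]"
  by (rule tpath_eq) (auto simp: is_path_ch)

lemma tdist_refl: "u \<in> V \<Longrightarrow> tdist E wt u u = 0"
  by (simp add: tdist_wsum tpath_refl)

lemma tpath_start: "u \<in> V \<Longrightarrow> w \<in> V \<Longrightarrow> u \<in> set (tpath E u w)"
  using tpath_path[of u w] by (metis is_path_ch hd_in_set)
lemma tpath_end: "u \<in> V \<Longrightarrow> w \<in> V \<Longrightarrow> w \<in> set (tpath E u w)"
  using tpath_path[of u w] by (metis is_path_ch last_in_set)

lemma tdist_nonneg: "weighted E wt \<Longrightarrow> u \<in> V \<Longrightarrow> w \<in> V \<Longrightarrow> tdist E wt u w \<ge> 0"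
  unfolding tdist_wsum using tpath_path[of u w]
  by (intro wsum_nonneg[of E]) (auto simp: weighted_def is_path_ch)

lemma segment_path:
  assumes "is_path E p u w" "a \<le> b" "b < length p"
  shows "is_path E (take (Suc b - a) (drop a p)) (p ! a) (p ! b)"
proof -
  let ?s = "take (Suc b - a) (drop a p)"
  have ne: "?s \<noteq> []" using assms by simp
  have len: "length ?s = Suc b - a" using assms by simp
  have "hd ?s = p ! a" using assms ne by (simp add: hd_conv_nth)
  moreover have "last ?s = p ! b" using assms ne len by (simp add: last_conv_nth)
  moreover have "distinct ?s" using assms by (simp add: is_path_ch distinct_take distinct_drop)
  moreover have "ch E ?s" using assms by (simp add: is_path_ch ch_take ch_drop)
  ultimately show ?thesis using ne by (simp add: is_path_ch)
qed

lemma segment_tpath: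
  assumes "u \<in> V" "w \<in> V" "a \<le> b" "b < length (tpath E u w)"
  shows "tpath E (tpath E u w ! a) (tpath E u w ! b) = take (Suc b - a) (drop a (tpath E u w))"
proof -
  have "set (tpath E u w) \<subseteq> V" using tpath_set_V assms by blast
  then have "tpath E u w ! a \<in> V" "tpath E u w ! b \<in> V" using assms by auto
  then show ?thesis using segment_path[OF tpath_path[OF assms(1,2)] assms(3,4)] tpath_eq by blast
qed

lemma rev_path: "is_path E p u w \<Longrightarrow> is_path E (rev p) w u"
  unfolding is_path_ch using ch_rev[of E p] E_sym by (auto simp: hd_rev last_rev)

lemma subpath:
  assumes "a \<in> V" "b \<in> V" "y \<in> set (tpath E a b)" "z \<in> set (tpath E a b)"
  shows "set (tpath E y z) \<subseteq> set (tpath E a b)"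
proof -
  let ?P = "tpath E a b"
  obtain i j where ij: "i < length ?P" "?P ! i = y" "j < length ?P" "?P ! j = z"
    using assms by (auto simp: in_set_conv_nth)
  have yz: "y \<in> V" "z \<in> V" using tpath_set_V assms by blast+
  show ?thesis
  proof (cases "i \<le> j")
    case True
    have "tpath E y z = take (Suc j - i) (drop i ?P)"
      using segment_path[OF tpath_path[OF assms(1,2)] True ij(3)] ij yz tpath_eq by metis
    then show ?thesis by (metis set_drop_subset set_take_subset subset_trans)
  next
    case False
    have "is_path E (take (Suc i - j) (drop j ?P)) z y"
      using segment_path[OF tpath_path[OF assms(1,2)], of j i] False ij by auto
    then have "tpath E y z = rev (take (Suc i - j) (drop j ?P))"
      using rev_path tpath_eq yz by blast
    then show ?thesis by (metis set_rev set_drop_subset set_take_subset subset_trans)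
  qed
qed

lemma tdist_add:
  assumes "a \<in> V" "c \<in> V" "b \<in> set (tpath E a c)"
  shows "tdist E wt a c = tdist E wt a b + tdist E wt b c"
proof -
  let ?P = "tpath E a c"
  obtain i where i: "i < length ?P" "?P ! i = b" using assms by (auto simp: in_set_conv_nth)
  have P: "is_path E ?P a c" using tpath_path assms by blast
  have bV: "b \<in> V" using tpath_set_V assms by blast
  have "is_path E (take (Suc i) ?P) a b"
    using segment_path[OF P, of 0 i] i P by (auto simp: is_path_ch hd_conv_nth)
  then have 1: "tpath E a b = take (Suc i) ?P" using tpath_eq assms bV by blast
  have "is_path E (drop i ?P) b c"
    using segment_path[OF P, of i "length ?P - 1"] i P
    by (auto simp: is_path_ch last_conv_nth)
  then have 2: "tpath E b c = drop i ?P" using tpath_eq assms bV by blast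
  show ?thesis unfolding tdist_wsum 1 2 using wsum_split i(1) by blast
qed

lemma tpath_union:
  assumes "a \<in> V" "b \<in> V" "c \<in> V"
  shows "set (tpath E a c) \<subseteq> set (tpath E a b) \<union> set (tpath E b c)"
proof -
  let ?p = "tpath E a b" and ?q = "tpath E b c"
  have p: "is_path E ?p a b" and q: "is_path E ?q b c" using tpath_path assms by blast+
  let ?w = "?p @ tl ?q"
  have chq: "ch E ?q" using q by (simp add: is_path_ch)
  have "ch E (tl ?q)" using ch_drop[OF chq, of 1] by (simp add: drop_Suc)
  moreover have "tl ?q \<noteq> [] \<Longrightarrow> E b (hd (tl ?q))"
    using q by (cases ?q; cases "tl ?q") (auto simp: is_path_ch ch_Cons)
  ultimately have "ch E ?w" using p by (auto simp: ch_append is_path_ch)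
  moreover have "?w \<noteq> []" "hd ?w = a" "last ?w = c"
    using p q by (auto simp: is_path_ch last_append; cases ?q; auto simp: last_tl)+
  ultimately obtain r where r: "is_path E r a c" "set r \<subseteq> set ?w"
    using walk_to_path by metis
  have "tpath E a c = r" using tpath_eq r assms by blast
  moreover have "set ?w \<subseteq> set ?p \<union> set ?q" by (cases ?q) auto
  ultimately show ?thesis using r by auto
qed

lemma concat_path:
  assumes "is_path E p1 a b" "is_path E p2 b c" "set p1 \<inter> set p2 \<subseteq> {b}"
  shows "is_path E (p1 @ tl p2) a c"
proof -
  obtain x2 where p2: "p2 = b # x2" using assms(2) by (cases p2) (auto simp: is_path_ch)
  have "b \<notin> set x2" using assms(2) p2 by (auto simp: is_path_ch)
  then have disj: "set p1 \<inter> set x2 = {}" using assms(3) p2 by auto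
  show ?thesis using assms disj p2
    by (auto simp: is_path_ch ch_append ch_Cons last_append)
qed

lemma gate:
  assumes "p \<in> V" "a \<in> V" "b \<in> V"
  shows "\<exists>x'\<in>set (tpath E a b). \<forall>y\<in>set (tpath E a b). x' \<in> set (tpath E p y)"
proof -
  let ?P = "tpath E a b" and ?q = "tpath E p a"
  have q: "is_path E ?q p a" using tpath_path assms by blast
  have "\<exists>i. i < length ?q \<and> ?q ! i \<in> set ?P"
    using q tpath_start[OF assms(2,3)] by (auto simp: is_path_ch last_conv_nth intro!: exI[of _ "length ?q - 1"])
  define i where "i = (LEAST i. i < length ?q \<and> ?q ! i \<in> set ?P)"
  have i: "i < length ?q" "?q ! i \<in> set ?P"
    using LeastI_ex[OF \<open>\<exists>i. _\<close>] unfolding i_def by blast+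
  have before: "j < i \<Longrightarrow> ?q ! j \<notin> set ?P" for j
    using not_less_Least[of j "\<lambda>i. i < length ?q \<and> ?q ! i \<in> set ?P"] i unfolding i_def[symmetric] by auto
  let ?x = "?q ! i"
  have q1: "is_path E (take (Suc i) ?q) p ?x"
    using segment_path[OF q, of 0 i] i q by (auto simp: is_path_ch hd_conv_nth)
  have xV: "?x \<in> V" using tpath_set_V[OF assms(2,3)] i by blast
  show ?thesis
  proof (intro bexI[OF _ i(2)] ballI)
    fix y assume y: "y \<in> set ?P"
    have yV: "y \<in> V" using tpath_set_V[OF assms(2,3)] y by blast
    have r: "is_path E (tpath E ?x y) ?x y" using tpath_path xV yV by blast
    have rs: "set (tpath E ?x y) \<subseteq> set ?P" using subpath assms i y by blast
    have "set (take (Suc i) ?q) \<inter> set (tpath E ?x y) \<subseteq> {?x}"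
    proof
      fix z assume z: "z \<in> set (take (Suc i) ?q) \<inter> set (tpath E ?x y)"
      then obtain j where j: "j < Suc i" "j < length ?q" "?q ! j = z"
        by (auto simp: in_set_conv_nth)
      have "z \<in> set ?P" using z rs by blast
      then have "\<not> j < i" using before j by auto
      then have "j = i" using j by simp
      then show "z \<in> {?x}" using j by simp
    qed
    then have "is_path E (take (Suc i) ?q @ tl (tpath E ?x y)) p y"
      using concat_path[OF q1 r] by blast
    then have "tpath E p y = take (Suc i) ?q @ tl (tpath E ?x y)"
      using tpath_eq assms yV by blast
    moreover have "?x \<in> set (take (Suc i) ?q)" using i by (auto simp: in_set_conv_nth intro: exI[of _ i])
    ultimately show "?x \<in> set (tpath E p y)" by simp
  qed
qed

lemma init_link:
  assumes "u \<in> V" "v0 \<in> V" "u \<noteq> v0"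
  shows "E u (tpath E u v0 ! 1)"
proof -
  have p: "is_path E (tpath E u v0) u v0" using tpath_path assms by blast
  then have "length (tpath E u v0) \<ge> 2" using assms(3)
    by (cases "tpath E u v0"; cases "tl (tpath E u v0)") (auto simp: is_path_ch)
  then show ?thesis using p by (auto simp: is_path_ch ch_def hd_conv_nth) (metis One_nat_def Suc_1 Suc_le_lessD nth_Cons_0 neq_Nil_conv)
qed

end

fun req :: "'v event \<Rightarrow> nat" where
  "req (Issue k) = k"
| "req (Recv k u w \<tau>) = k"

fun nd :: "(nat \<Rightarrow> 'v) \<Rightarrow> 'v event \<Rightarrow> 'v" where
  "nd vr (Issue k) = vr k"
| "nd vr (Recv k u w \<tau>) = u"

lemma run_append:
  "run wt vr tr s (xs @ ys) = (case run wt vr tr s xs of None \<Rightarrow> None | Some s' \<Rightarrow> run wt vr tr s' ys)"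
  by (induction xs arbitrary: s) (auto split: option.split)

lemma filter_le1_pos:
  assumes "length (filter P xs) \<le> 1" "q < length xs" "q' < length xs" "P (xs ! q)" "P (xs ! q')"
  shows "q = q'"
proof (rule ccontr)
  assume "q \<noteq> q'"
  have "{q, q'} \<subseteq> {i. i < length xs \<and> P (xs ! i)}" using assms by auto
  then have "card {q, q'} \<le> card {i. i < length xs \<and> P (xs ! i)}" by (intro card_mono) auto
  then show False using assms \<open>q \<noteq> q'\<close> by (simp add: length_filter_conv_card)
qed

locale arrow = tree_ctx V E for V :: "'v set" and E +
  fixes wt :: "'v \<Rightarrow> 'v \<Rightarrow> real" and v0 :: 'v and n :: nat and vr :: "nat \<Rightarrow> 'v"
    and tr :: "nat \<Rightarrow> real" and evs :: "'v event list" and \<sigma> :: "'v st"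
  assumes weights: "weighted E wt"
    and nodes: "\<forall>k\<le>n. vr k \<in> V"
    and dummy: "vr 0 = v0"
    and exec: "arrow_exec E wt v0 n vr tr evs \<sigma>"
    and order: "\<forall>k. 1 \<le> k \<and> k \<le> n \<longrightarrow> prd \<sigma> k = Some (k - 1)"
begin

abbreviation "len \<equiv> length evs"
abbreviation "ev q \<equiv> evs ! q"
abbreviation "tm q \<equiv> ev_time tr (evs ! q)"
abbreviation "rq q \<equiv> req (evs ! q)"
abbreviation "nq q \<equiv> nd vr (evs ! q)"

definition st :: "nat \<Rightarrow> 'v st" where
  "st p = the (run wt vr tr (init_st E v0) (take p evs))"

lemma v0V: "v0 \<in> V" using nodes dummy by auto

lemma run_take: "p \<le> len \<Longrightarrow> run wt vr tr (init_st E v0) (take p evs) = Some (st p)"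
proof -
  assume p: "p \<le> len"
  have "run wt vr tr (init_st E v0) (take p evs @ drop p evs) = Some \<sigma>"
    using exec by (simp add: arrow_exec_def)
  then show ?thesis unfolding run_append st_def by (auto split: option.splits)
qed

lemma st_step: "p < len \<Longrightarrow> step wt vr tr (st p) (ev p) = Some (st (Suc p))"
proof -
  assume p: "p < len"
  have "run wt vr tr (init_st E v0) (take p evs @ [ev p]) = Some (st (Suc p))"
    using run_take[of "Suc p"] p by (simp add: take_Suc_conv_app_nth)
  then show ?thesis using run_take[of p] p by (auto simp: run_append split: option.splits)
qed

lemma st_0: "st 0 = init_st E v0" by (simp add: st_def)
lemma st_len: "st len = \<sigma>" using run_take[of len] exec by (simp add: arrow_exec_def)
lemma msgs_final: "msgs \<sigma> = {}" using exec by (simp add: arrow_exec_def)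

lemma issue_count: "length (filter (\<lambda>e. e = Issue k) evs) = (if 1 \<le> k \<and> k \<le> n then 1 else 0)"
  using exec by (simp add: arrow_exec_def)

lemma issue_range: "q < len \<Longrightarrow> ev q = Issue k \<Longrightarrow> 1 \<le> k \<and> k \<le> n"
proof -
  assume "q < len" "ev q = Issue k"
  then have "Issue k \<in> set (filter (\<lambda>e. e = Issue k) evs)" by (metis (mono_tags) nth_mem mem_Collect_eq set_filter)
  then have "length (filter (\<lambda>e. e = Issue k) evs) \<noteq> 0" by (metis length_0_conv empty_iff list.set(1))
  then show ?thesis using issue_count[of k] by (auto split: if_splits)
qed

lemma issue_unique: "q < len \<Longrightarrow> q' < len \<Longrightarrow> ev q = Issue k \<Longrightarrow> ev q' = Issue k \<Longrightarrow> q = q'"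
  using issue_count[of k] filter_le1_pos[of "\<lambda>e. e = Issue k" evs q q'] by (auto split: if_splits)

lemma issue_exists: "1 \<le> k \<Longrightarrow> k \<le> n \<Longrightarrow> \<exists>q<len. ev q = Issue k"
proof -
  assume "1 \<le> k" "k \<le> n"
  then have "filter (\<lambda>e. e = Issue k) evs \<noteq> []" using issue_count[of k] by auto
  then have "Issue k \<in> set evs" by (metis (mono_tags) filter_False)
  then show ?thesis by (metis in_set_conv_nth)
qed

lemma sorted_tm: "q \<le> q' \<Longrightarrow> q' < len \<Longrightarrow> tm q \<le> tm q'"
  using exec unfolding arrow_exec_def by (auto simp: sorted_iff_nth_mono)

primrec L :: "nat \<Rightarrow> 'v \<Rightarrow> nat" where
  "L 0 u = 0"
| "L (Suc p) u = (if nq p = u then rq p else L p u)"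

definition Inv :: "nat \<Rightarrow> bool" where
  "Inv p \<longleftrightarrow>
    (\<forall>u\<in>V. lnk (st p) u = u \<longrightarrow> lastq (st p) u = L p u \<and> vr (L p u) = u) \<and>
    (\<forall>u\<in>V. lnk (st p) u \<noteq> u \<longrightarrow> E u (lnk (st p) u) \<and>
        (L p u = 0 \<or> (\<exists>q<p. nq q = lnk (st p) u \<and> rq q = L p u))) \<and>
    (\<forall>k a b s. (k,a,b,s) \<in> msgs (st p) \<longrightarrow> E a b \<and>
        (\<exists>q<p. nq q = a \<and> rq q = k \<and> tm q = s) \<and> (\<exists>q<p. ev q = Issue k)) \<and>
    (\<forall>k a b s a' b' s'. (k,a,b,s) \<in> msgs (st p) \<longrightarrow> (k,a',b',s') \<in> msgs (st p) \<longrightarrow> (a,b,s) = (a',b',s'))"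

lemma Inv_0: "Inv 0"
proof -
  have a: "E u (lnk (init_st E v0) u)" if "u \<in> V" "u \<noteq> v0" for u
    using init_link[of u v0] v0V that by (simp add: init_st_def)
  have b: "u = v0" if "u \<in> V" "lnk (init_st E v0) u = u" for u
  proof (rule ccontr)
    assume "u \<noteq> v0"
    then have "E u (lnk (init_st E v0) u)" using a[of u] that by blast
    then show False using E_irr that(2) by metis
  qed
  have c: "E u (lnk (init_st E v0) u)" if "u \<in> V" "lnk (init_st E v0) u \<noteq> u" for u
    using a[of u] that by (cases "u = v0") (simp_all add: init_st_def)
  have d: "msgs (init_st E v0) = {}" by (simp add: init_st_def)
  show ?thesis unfolding Inv_def st_0 d
  proof (intro conjI)
    show "\<forall>u\<in>V. lnk (init_st E v0) u = u \<longrightarrow> lastq (init_st E v0) u = L 0 u \<and> vr (L 0 u) = u"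
    proof (intro ballI impI)
      fix u assume u: "u \<in> V" "lnk (init_st E v0) u = u"
      then have "u = v0" using b by blast
      then show "lastq (init_st E v0) u = L 0 u \<and> vr (L 0 u) = u" using dummy by (simp add: init_st_def)
    qed
    show "\<forall>u\<in>V. lnk (init_st E v0) u \<noteq> u \<longrightarrow> E u (lnk (init_st E v0) u) \<and>
        (L 0 u = 0 \<or> (\<exists>q<0. nq q = lnk (init_st E v0) u \<and> rq q = L 0 u))"
      using c by simp
  qed simp_all
qed

lemma recv_enabled:
  "p < len \<Longrightarrow> ev p = Recv k u w \<tau> \<Longrightarrow> \<exists>s. (k,w,u,s) \<in> msgs (st p) \<and> s \<le> \<tau> \<and> \<tau> \<le> s + wt w u"
  using st_step[of p] by (auto split: if_splits)

lemma step_eq_Issue: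
  assumes "p < len" "ev p = Issue k"
  shows "st (Suc p) = (if lnk (st p) (vr k) = vr k then
           (st p)\<lparr>prd := (prd (st p))(k := Some (lastq (st p) (vr k))), lastq := (lastq (st p))(vr k := k)\<rparr>
         else (st p)\<lparr>msgs := insert (k, vr k, lnk (st p) (vr k), tr k) (msgs (st p)),
                lnk := (lnk (st p))(vr k := vr k), lastq := (lastq (st p))(vr k := k)\<rparr>)"
  using st_step[OF assms(1)] assms(2) by (auto simp: Let_def split: if_splits)

lemma step_eq_Recv:
  assumes "p < len" "ev p = Recv k u w \<tau>"
    and "s0 = (SOME s. (k,w,u,s) \<in> msgs (st p) \<and> s \<le> \<tau> \<and> \<tau> \<le> s + wt w u)"
  shows "st (Suc p) = (if lnk (st p) u = u then
           (st p)\<lparr>msgs := msgs (st p) - {(k,w,u,s0)}, prd := (prd (st p))(k := Some (lastq (st p) u)),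
                   lnk := (lnk (st p))(u := w)\<rparr>
         else (st p)\<lparr>msgs := insert (k,u,lnk (st p) u,\<tau>) (msgs (st p) - {(k,w,u,s0)}),
                   lnk := (lnk (st p))(u := w)\<rparr>)"
proof -
  have "\<exists>s. (k,w,u,s) \<in> msgs (st p) \<and> s \<le> \<tau> \<and> \<tau> \<le> s + wt w u" using recv_enabled assms by blast
  then show ?thesis using st_step[OF assms(1)] assms(2,3) by (auto simp: Let_def split: if_splits)
qed

lemma recv_s0:
  assumes "p < len" "ev p = Recv k u w \<tau>"
  shows "(k,w,u,SOME s. (k,w,u,s) \<in> msgs (st p) \<and> s \<le> \<tau> \<and> \<tau> \<le> s + wt w u) \<in> msgs (st p)"
  using someI_ex[OF recv_enabled[OF assms]] by blast

lemma lnk_step: "p < len \<Longrightarrow> lnk (st (Suc p)) x =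
   (if x = nq p then (case ev p of Issue k \<Rightarrow> x | Recv k u w \<tau> \<Rightarrow> w) else lnk (st p) x)"
  by (cases "ev p") (auto simp: step_eq_Issue step_eq_Recv)

lemma lastq_step: "p < len \<Longrightarrow> lastq (st (Suc p)) x =
   (if x = nq p \<and> ev p = Issue (rq p) then rq p else lastq (st p) x)"
  by (cases "ev p") (auto simp: step_eq_Issue step_eq_Recv)

lemma prd_step: "p < len \<Longrightarrow> prd (st (Suc p)) k =
   (if k = rq p \<and> lnk (st p) (nq p) = nq p then Some (lastq (st p) (nq p)) else prd (st p) k)"
  by (cases "ev p") (auto simp: step_eq_Issue step_eq_Recv)


lemma InvD:
  assumes "Inv p"
  shows InvD1: "\<And>u. u\<in>V \<Longrightarrow> lnk (st p) u = u \<Longrightarrow> lastq (st p) u = L p u \<and> vr (L p u) = u"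
    and InvD2: "\<And>u. u\<in>V \<Longrightarrow> lnk (st p) u \<noteq> u \<Longrightarrow> E u (lnk (st p) u) \<and>
        (L p u = 0 \<or> (\<exists>q<p. nq q = lnk (st p) u \<and> rq q = L p u))"
    and InvD3: "\<And>k a b s. (k,a,b,s) \<in> msgs (st p) \<Longrightarrow> E a b \<and>
        (\<exists>q<p. nq q = a \<and> rq q = k \<and> tm q = s) \<and> (\<exists>q<p. ev q = Issue k)"
    and InvD4: "\<And>k a b s a' b' s'. (k,a,b,s) \<in> msgs (st p) \<Longrightarrow> (k,a',b',s') \<in> msgs (st p) \<Longrightarrow> (a,b,s) = (a',b',s')"
  using assms unfolding Inv_def by blast+

lemma ev_facts:
  assumes "p < len" "Inv p"
  shows "nq p \<in> V \<and> 1 \<le> rq p \<and> rq p \<le> n"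
proof (cases "ev p")
  case (Issue k)
  then show ?thesis using issue_range[OF assms(1) Issue] nodes by auto
next
  case (Recv k u w \<tau>)
  obtain s where s: "(k,w,u,s) \<in> msgs (st p)" using recv_enabled[OF assms(1) Recv] by blast
  then obtain q where "q < p" "ev q = Issue k" "E w u" using InvD3[OF assms(2) s] by blast
  then show ?thesis using issue_range[of q k] assms(1) Recv E_V by auto
qed

lemma msgs_step:
  assumes p: "p < len" and inv: "Inv p"
  shows "msgs (st (Suc p)) = {m \<in> msgs (st p). fst m \<noteq> rq p} \<union>
     (if lnk (st p) (nq p) \<noteq> nq p then {(rq p, nq p, lnk (st p) (nq p), tm p)} else {})"
proof (cases "ev p")
  case (Issue k)
  have "fst m \<noteq> k" if m_in: "m \<in> msgs (st p)" for m
  proof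
    assume "fst m = k"
    then obtain a b s where "(k,a,b,s) \<in> msgs (st p)" using m_in \<open>fst m = k\<close> by (cases m) auto
    then obtain q where "q < p" "ev q = Issue k" using InvD3[OF inv] by blast
    then show False using issue_unique[of q p k] p Issue by auto
  qed
  then have e1: "{m \<in> msgs (st p). fst m \<noteq> rq p} = msgs (st p)" using Issue by auto
  have e2: "msgs (st (Suc p)) = (if lnk (st p) (vr k) = vr k then msgs (st p)
      else insert (k, vr k, lnk (st p) (vr k), tr k) (msgs (st p)))"
    using step_eq_Issue[OF p Issue] by simp
  show ?thesis unfolding e1 e2 using Issue by simp
next
  case (Recv k u w \<tau>)
  define s0 where "s0 = (SOME s. (k,w,u,s) \<in> msgs (st p) \<and> s \<le> \<tau> \<and> \<tau> \<le> s + wt w u)"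
  have s0: "(k,w,u,s0) \<in> msgs (st p)" using recv_s0[OF p Recv] unfolding s0_def .
  have uq: "m = (k,w,u,s0)" if "m \<in> msgs (st p)" "fst m = k" for m
  proof -
    obtain k' a b s where m: "m = (k',a,b,s)" by (cases m) blast
    then have "(k,a,b,s) \<in> msgs (st p)" using that by simp
    then have "(a,b,s) = (w,u,s0)" using InvD4[OF inv _ s0] by blast
    moreover have "k' = k" using m that(2) by simp
    ultimately show ?thesis using m by simp
  qed
  have "msgs (st p) - {(k,w,u,s0)} = {m \<in> msgs (st p). fst m \<noteq> k}"
  proof (intro set_eqI iffI)
    fix m assume "m \<in> msgs (st p) - {(k,w,u,s0)}"
    then show "m \<in> {m \<in> msgs (st p). fst m \<noteq> k}" using uq by blast
  next
    fix m assume "m \<in> {m \<in> msgs (st p). fst m \<noteq> k}"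
    then show "m \<in> msgs (st p) - {(k,w,u,s0)}" by auto
  qed
  then have e1: "msgs (st p) - {(k,w,u,s0)} = {m \<in> msgs (st p). fst m \<noteq> rq p}" using Recv by simp
  have e2: "msgs (st (Suc p)) = (if lnk (st p) u = u then msgs (st p) - {(k,w,u,s0)}
      else insert (k,u,lnk (st p) u,\<tau>) (msgs (st p) - {(k,w,u,s0)}))"
    using step_eq_Recv[OF p Recv s0_def] by simp
  have r: "rq p = k" "nq p = u" "tm p = \<tau>" using Recv by simp_all
  show ?thesis unfolding e2 e1 r by auto
qed

lemma Inv_step:
  assumes p: "p < len" and inv: "Inv p"
  shows "Inv (Suc p)"
proof -
  note I1 = InvD1[OF inv] and I2 = InvD2[OF inv] and I3 = InvD3[OF inv] and I4 = InvD4[OF inv]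
  note M = msgs_step[OF p inv]
  have xV: "nq p \<in> V" using ev_facts[OF p inv] by blast
  have P1: "lastq (st (Suc p)) u = L (Suc p) u \<and> vr (L (Suc p) u) = u"
    if u: "u \<in> V" "lnk (st (Suc p)) u = u" for u
  proof (cases "u = nq p")
    case True
    show ?thesis
    proof (cases "ev p")
      case (Issue k)
      then show ?thesis using True p by (simp add: lastq_step)
    next
      case (Recv k u' w \<tau>)
      obtain s where s: "(k,w,u',s) \<in> msgs (st p)" using recv_enabled[OF p Recv] by blast
      have "E w u'" using I3[OF s] by blast
      then have "w \<noteq> u'" using E_irr by blast
      then show ?thesis using u True Recv p by (simp add: lnk_step)
    qed
  next
    case False
    then show ?thesis using u p I1[of u] by (simp add: lnk_step lastq_step)
  qed
  have P2: "E u (lnk (st (Suc p)) u) \<and> (L (Suc p) u = 0 \<or> (\<exists>q<Suc p. nq q = lnk (st (Suc p)) u \<and> rq q = L (Suc p) u))"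
    if u: "u \<in> V" "lnk (st (Suc p)) u \<noteq> u" for u
  proof (cases "u = nq p")
    case True
    show ?thesis
    proof (cases "ev p")
      case (Issue k)
      then show ?thesis using True p u by (simp add: lnk_step)
    next
      case (Recv k u' w \<tau>)
      obtain s where s: "(k,w,u',s) \<in> msgs (st p)" using recv_enabled[OF p Recv] by blast
      obtain q where q: "q < p" "nq q = w" "rq q = k" using I3[OF s] by blast
      have "E u' w" using I3[OF s] E_sym by blast
      then show ?thesis using True Recv p q by (auto simp: lnk_step intro!: exI[of _ q])
    qed
  next
    case False
    then have "lnk (st (Suc p)) u = lnk (st p) u" "L (Suc p) u = L p u" using p by (simp_all add: lnk_step)
    then show ?thesis using I2[of u] u by (metis less_SucI)
  qed
  have P3: "E a b \<and> (\<exists>q<Suc p. nq q = a \<and> rq q = k \<and> tm q = s) \<and> (\<exists>q<Suc p. ev q = Issue k)"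
    if m: "(k,a,b,s) \<in> msgs (st (Suc p))" for k a b s
  proof (cases "(k,a,b,s) \<in> msgs (st p)")
    case True
    then obtain q1 q2 where "E a b" "q1 < p" "nq q1 = a \<and> rq q1 = k \<and> tm q1 = s" "q2 < p" "ev q2 = Issue k"
      using I3[OF True] by blast
    then show ?thesis by (metis less_SucI)
  next
    case False
    then have new: "k = rq p" "a = nq p" "b = lnk (st p) (nq p)" "s = tm p" "lnk (st p) (nq p) \<noteq> nq p"
      using m M by (auto split: if_splits)
    have "E a b" using I2[OF xV new(5)] new by simp
    moreover have "\<exists>q<Suc p. ev q = Issue k"
    proof (cases "ev p")
      case (Issue k')
      then show ?thesis using new by (auto intro!: exI[of _ p])
    next
      case (Recv k' u' w \<tau>)
      obtain s' where s: "(k',w,u',s') \<in> msgs (st p)" using recv_enabled[OF p Recv] by blast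
      then obtain qa where "qa < p" "ev qa = Issue k'" using I3[OF s] by blast
      moreover have "k = k'" using new Recv by simp
      ultimately show ?thesis by (metis less_SucI)
    qed
    ultimately show ?thesis using new by (auto intro!: exI[of _ p])
  qed
  have P4: "(a,b,s) = (a',b',s')"
    if m: "(k,a,b,s) \<in> msgs (st (Suc p))" "(k,a',b',s') \<in> msgs (st (Suc p))" for k a b s a' b' s'
    using m M I4[of k a b s a' b' s'] by (auto split: if_splits)
  show ?thesis unfolding Inv_def using P1 P2 P3 P4 by blast
qed

lemma Inv_all: "p \<le> len \<Longrightarrow> Inv p"
  by (induction p) (auto simp: Inv_0 Inv_step)

end

context arrow
begin

lemma inv: "p \<le> len \<Longrightarrow> Inv p" by (rule Inv_all)

lemma evV: "q < len \<Longrightarrow> nq q \<in> V" using ev_facts[OF _ inv] by auto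
lemma evR: "q < len \<Longrightarrow> 1 \<le> rq q \<and> rq q \<le> n" using ev_facts[OF _ inv] by auto

lemma fwd:
  "q < len \<Longrightarrow> lnk (st q) (nq q) \<noteq> nq q \<Longrightarrow> (rq q, nq q, lnk (st q) (nq q), tm q) \<in> msgs (st (Suc q))"
  using msgs_step[OF _ inv] by auto

lemma msg_new: "q < len \<Longrightarrow> (k,a,b,s) \<in> msgs (st (Suc q)) \<Longrightarrow> (k,a,b,s) \<in> msgs (st q) \<or> k = rq q"
  using msgs_step[OF _ inv] by (auto split: if_splits)

lemma msg_persist: "q < len \<Longrightarrow> (k,a,b,s) \<in> msgs (st q) \<Longrightarrow> rq q \<noteq> k \<Longrightarrow> (k,a,b,s) \<in> msgs (st (Suc q))"
  using msgs_step[OF _ inv] by auto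

lemma prd_persist: "q < len \<Longrightarrow> rq q \<noteq> k \<Longrightarrow> prd (st (Suc q)) k = prd (st q) k"
  using prd_step by auto

lemma issue_before:
  assumes "q < len" "rq q = k"
  shows "\<exists>q0\<le>q. ev q0 = Issue k"
proof (cases "ev q")
  case (Issue k') then show ?thesis using assms by auto
next
  case (Recv k' u w \<tau>)
  obtain s where s: "(k',w,u,s) \<in> msgs (st q)" using recv_enabled[OF assms(1) Recv] by blast
  then show ?thesis using InvD3[OF inv s] assms Recv by (auto intro: less_imp_le)
qed

lemma recv_later:
  assumes "(k,a,b,s) \<in> msgs (st p)" "p \<le> len"
  shows "\<exists>q. p \<le> q \<and> q < len \<and> ev q = Recv k b a (tm q) \<and> s \<le> tm q \<and> tm q \<le> s + wt a b \<and>
            (\<forall>r. p \<le> r \<and> r < q \<longrightarrow> rq r \<noteq> k)"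
  using assms
proof (induction "len - p" arbitrary: p rule: less_induct)
  case less
  show ?case
  proof (cases "p = len")
    case True
    then show ?thesis using less.prems st_len msgs_final by auto
  next
    case False
    then have p: "p < len" using less.prems by simp
    show ?thesis
    proof (cases "rq p = k")
      case True
      show ?thesis
      proof (cases "ev p")
        case (Issue k')
        obtain q0 where "q0 < p" "ev q0 = Issue k" using InvD3[OF inv less.prems(1)] less.prems by blast
        then show ?thesis using issue_unique[of q0 p k] p Issue True by auto
      next
        case (Recv k' u w \<tau>)
        obtain s' where s': "(k',w,u,s') \<in> msgs (st p)" "s' \<le> \<tau>" "\<tau> \<le> s' + wt w u"
          using recv_enabled[OF p Recv] by blast
        have "k' = k" using True Recv by simp
        then have "(a,b,s) = (w,u,s')" using InvD4[OF inv less.prems(1)] s' less.prems by blast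
        then show ?thesis using Recv s' p \<open>k' = k\<close> by (auto intro!: exI[of _ p])
      qed
    next
      case False
      have m: "(k,a,b,s) \<in> msgs (st (Suc p))" using msg_persist[OF p less.prems(1) False] .
      have "len - Suc p < len - p" "Suc p \<le> len" using p by auto
      then obtain q where q: "Suc p \<le> q" "q < len" "ev q = Recv k b a (tm q)" "s \<le> tm q" "tm q \<le> s + wt a b"
            "\<forall>r. Suc p \<le> r \<and> r < q \<longrightarrow> rq r \<noteq> k"
        using less.hyps[of "Suc p"] m by blast
      have "\<forall>r. p \<le> r \<and> r < q \<longrightarrow> rq r \<noteq> k"
      proof (intro allI impI)
        fix r assume "p \<le> r \<and> r < q"
        then show "rq r \<noteq> k" using q(6) False by (cases "r = p") auto
      qed
      then show ?thesis using q by (auto intro!: exI[of _ q])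
    qed
  qed
qed

lemma after_queue:
  assumes q: "q < len" and self: "lnk (st q) (nq q) = nq q"
  shows "Suc q \<le> r \<Longrightarrow> r \<le> len \<Longrightarrow> prd (st r) (rq q) = Some (L q (nq q)) \<and> (\<forall>a b s. (rq q,a,b,s) \<notin> msgs (st r))"
proof (induction r rule: dec_induct)
  case base
  have "prd (st (Suc q)) (rq q) = Some (lastq (st q) (nq q))" using prd_step[OF q] self by simp
  moreover have "lastq (st q) (nq q) = L q (nq q)" using InvD1[OF inv evV[OF q] self] q by simp
  moreover have "(rq q,a,b,s) \<notin> msgs (st (Suc q))" for a b s
    using msgs_step[OF q inv[OF less_imp_le[OF q]]] self by auto
  ultimately show ?case by simp
next
  case (step r)
  then have r: "r < len" by simp
  obtain q0 where q0: "q0 \<le> q" "ev q0 = Issue (rq q)" using issue_before[OF q refl] by blast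
  have ne: "rq r \<noteq> rq q"
  proof
    assume eq: "rq r = rq q"
    show False
    proof (cases "ev r")
      case (Issue k)
      then have "r = q0" using issue_unique[of r q0 "rq q"] q0 r q eq by auto
      then show False using step q0 by simp
    next
      case (Recv k u w \<tau>)
      then show False using recv_enabled[OF r Recv] step eq by auto
    qed
  qed
  have IH: "prd (st r) (rq q) = Some (L q (nq q))" "\<forall>a b s. (rq q,a,b,s) \<notin> msgs (st r)"
    using step.IH r by auto
  show ?case
  proof (intro conjI allI)
    show "prd (st (Suc r)) (rq q) = Some (L q (nq q))" using IH(1) prd_persist[OF r ne] by simp
  next
    fix a b s
    show "(rq q, a, b, s) \<notin> msgs (st (Suc r))" using IH(2) msg_new[OF r, of "rq q" a b s] ne by auto
  qed
qed

lemma queue_pred: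
  assumes q: "q < len" and self: "lnk (st q) (nq q) = nq q"
  shows "L q (nq q) = rq q - 1"
proof -
  have "prd \<sigma> (rq q) = Some (L q (nq q))" using after_queue[OF q self, of len] q st_len by simp
  moreover have "prd \<sigma> (rq q) = Some (rq q - 1)" using order evR[OF q] by blast
  ultimately show ?thesis by simp
qed

lemma no_visit_after_queue:
  assumes q: "q < len" and self: "lnk (st q) (nq q) = nq q" and r: "q < r" "r < len"
  shows "rq r \<noteq> rq q"
proof
  assume eq: "rq r = rq q"
  obtain q0 where q0: "q0 \<le> q" "ev q0 = Issue (rq q)" using issue_before[OF q refl] by blast
  show False
  proof (cases "ev r")
    case (Issue k)
    then have "r = q0" using issue_unique[of r q0 "rq q"] q0 r q eq by auto
    then show False using r q0 by simp
  next
    case (Recv k u w \<tau>)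
    then show False using recv_enabled[OF r(2) Recv] after_queue[OF q self, of r] r eq by auto
  qed
qed


lemma L_Suc_at: "L (Suc q) (nq q) = rq q" by simp
lemma L_Suc_other: "u \<noteq> nq q \<Longrightarrow> L (Suc q) u = L q u" by simp

lemma monoA:
  assumes q0: "q0 < len"
  shows "L q0 (nq q0) < rq q0"
proof (rule ccontr)
  assume neg: "\<not> L q0 (nq q0) < rq q0"
  define P where "P m \<longleftrightarrow> (\<exists>q. q < len \<and> rq q = m \<and> m \<le> L q (nq q))" for m
  have "P (rq q0)" using q0 neg unfolding P_def by auto
  define m where "m = (LEAST m. P m)"
  have Pm: "P m" unfolding m_def using LeastI[of P, OF \<open>P (rq q0)\<close>] .
  have minm: "L q (nq q) < rq q" if "q < len" "rq q < m" for q
  proof (rule ccontr)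
    assume "\<not> L q (nq q) < rq q"
    then have "P (rq q)" using that unfolding P_def by auto
    then show False using not_less_Least[of "rq q" P] that unfolding m_def by blast
  qed
  obtain qv where qv: "qv < len" "rq qv = m" "m \<le> L qv (nq qv)" using Pm unfolding P_def by blast
  have m1: "1 \<le> m" using evR[OF qv(1)] qv by simp
  have persist: "m \<le> L r u" if "m \<le> L q u" "q \<le> r" "r \<le> len" for q r u
    using that(2,3,1)
  proof (induction r rule: dec_induct)
    case base then show ?case by simp
  next
    case (step r)
    show ?case
    proof (cases "nq r = u")
      case True
      show ?thesis
      proof (cases "m \<le> rq r")
        case True
        then show ?thesis using \<open>nq r = u\<close> by simp
      next
        case False
        then have "L r u < rq r" using minm[of r] step \<open>nq r = u\<close> by simp
        then show ?thesis using step False by simp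
      qed
    next
      case False
      then show ?thesis using step by simp
    qed
  qed
  have handler: "False"
    if q: "q < len" "rq q = m" "m \<le> L q (nq q)"
      and chase: "\<And>a b s. (m,a,b,s) \<in> msgs (st (Suc q)) \<Longrightarrow> m \<le> L (Suc q) b \<Longrightarrow> False" for q
  proof (cases "lnk (st q) (nq q) = nq q")
    case True
    then have "L q (nq q) = m - 1" using queue_pred[OF q(1)] q(2) by simp
    then show False using q(3) m1 by simp
  next
    case False
    let ?u = "nq q" and ?c = "lnk (st q) (nq q)"
    have msg: "(m, ?u, ?c, tm q) \<in> msgs (st (Suc q))" using fwd[OF q(1) False] q(2) by simp
    have I2: "E ?u ?c \<and> (L q ?u = 0 \<or> (\<exists>q'<q. nq q' = ?c \<and> rq q' = L q ?u))"
      using InvD2[OF inv[OF less_imp_le[OF q(1)]] evV[OF q(1)] False] .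
    then obtain q' where q': "q' < q" "nq q' = ?c" "rq q' = L q ?u" using q(3) m1 by auto
    have "m \<le> L (Suc q') ?c" using q' q(3) by simp
    then have "m \<le> L q ?c" using persist[of "Suc q'" ?c q] q' q(1) by simp
    moreover have "?c \<noteq> ?u" using False by simp
    ultimately have "m \<le> L (Suc q) ?c" by simp
    then show False using chase[OF msg] by blast
  qed
  have chase: "False" if "p \<le> len" "(m,a,b,s) \<in> msgs (st p)" "m \<le> L p b" for p a b s
    using that
  proof (induction "len - p" arbitrary: p a b s rule: less_induct)
    case less
    obtain q where q: "p \<le> q" "q < len" "ev q = Recv m b a (tm q)"
      using recv_later[OF less.prems(2,1)] by blast
    have nqb: "nq q = b" "rq q = m" by (subst q(3), simp)+
    have "m \<le> L q b" using persist[OF less.prems(3) q(1)] q(2) by simp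
    then have "m \<le> L q (nq q)" using nqb by simp
    moreover have "False" if "(m,a',b',s') \<in> msgs (st (Suc q))" "m \<le> L (Suc q) b'" for a' b' s'
    proof -
      have "len - Suc q < len - p" "Suc q \<le> len" using q(1,2) by auto
      then show False using less.hyps[of "Suc q" a' b' s'] that by blast
    qed
    ultimately show False using handler[OF q(2) nqb(2)] by blast
  qed
  show False using handler[OF qv] chase[of "Suc qv"] qv(1) by (meson Suc_leI)
qed

lemma L_mono: "q \<le> r \<Longrightarrow> r \<le> len \<Longrightarrow> L q u \<le> L r u"
proof (induction r rule: dec_induct)
  case base then show ?case by simp
next
  case (step r)
  then show ?case using monoA[of r] by (cases "nq r = u") auto
qed

lemma visit_L: "q < r \<Longrightarrow> r \<le> len \<Longrightarrow> nq q = u \<Longrightarrow> rq q \<le> L r u"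
  using L_mono[of "Suc q" r u] by simp

lemma visit_order:
  assumes "q < len" "q' < len" "nq q = nq q'" "rq q < rq q'"
  shows "q < q'"
proof (rule ccontr)
  assume "\<not> q < q'"
  then have "q' < q" using assms(4) by (cases "q = q'") auto
  then have "rq q' \<le> L q (nq q)" using visit_L[of q' q "nq q"] assms by simp
  then show False using monoA[OF assms(1)] assms(4) by simp
qed

lemma visit_once:
  assumes "q < q'" "q' < len" "nq q = nq q'" "rq q = rq q'"
  shows False
  using visit_L[of q q' "nq q'"] assms monoA[OF assms(2)] by simp

end

context arrow
begin

definition VI :: "nat \<Rightarrow> nat list" where "VI k = filter (\<lambda>q. rq q = k) [0..<len]"
definition rt :: "nat \<Rightarrow> 'v list" where "rt k = map (\<lambda>q. nq q) (VI k)"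

lemma VI_set: "q \<in> set (VI k) \<longleftrightarrow> q < len \<and> rq q = k"
  by (auto simp: VI_def)

lemma VI_sorted: "sorted_wrt (<) (VI k)"
  unfolding VI_def by (rule sorted_wrt_filter) simp

lemma VI_less: "h < h' \<Longrightarrow> h' < length (VI k) \<Longrightarrow> VI k ! h < VI k ! h'"
  using sorted_wrt_nth_less[OF VI_sorted] by blast

lemma VI_less_iff: "h < length (VI k) \<Longrightarrow> h' < length (VI k) \<Longrightarrow> VI k ! h < VI k ! h' \<longleftrightarrow> h < h'"
  using VI_less[of h h' k] VI_less[of h' h k] by (metis less_asym linorder_neqE_nat)

lemma VI_mem: "h < length (VI k) \<Longrightarrow> VI k ! h < len \<and> rq (VI k ! h) = k"
  using VI_set nth_mem by blast

lemma rt_len: "length (rt k) = length (VI k)" by (simp add: rt_def)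
lemma rt_nth: "h < length (VI k) \<Longrightarrow> rt k ! h = nq (VI k ! h)" by (simp add: rt_def)

lemma VI_next:
  assumes h: "Suc h < length (VI k)"
  defines "q \<equiv> VI k ! h"
  shows "lnk (st q) (nq q) \<noteq> nq q \<and> rt k ! Suc h = lnk (st q) (nq q) \<and>
         tm (VI k ! Suc h) \<le> tm q + wt (nq q) (lnk (st q) (nq q))"
proof -
  have q: "q < len" "rq q = k" using VI_mem[of h k] h q_def by auto
  have q': "VI k ! Suc h < len" "rq (VI k ! Suc h) = k" "q < VI k ! Suc h"
    using VI_mem[OF h] VI_less[OF _ h, of h] q_def by auto
  have nself: "lnk (st q) (nq q) \<noteq> nq q"
    using no_visit_after_queue[OF q(1) _ q'(3) q'(1)] q q' by auto
  let ?c = "lnk (st q) (nq q)"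
  have msg: "(k, nq q, ?c, tm q) \<in> msgs (st (Suc q))" using fwd[OF q(1) nself] q by simp
  obtain q'' where q'': "Suc q \<le> q''" "q'' < len" "ev q'' = Recv k ?c (nq q) (tm q'')"
     "tm q'' \<le> tm q + wt (nq q) ?c" "\<forall>r. Suc q \<le> r \<and> r < q'' \<longrightarrow> rq r \<noteq> k"
    using recv_later[OF msg] q(1) by (meson Suc_leI)
  have rq'': "rq q'' = k" "nq q'' = ?c" by (subst q''(3), simp)+
  have eq: "VI k ! Suc h = q''"
  proof (rule ccontr)
    assume ne: "VI k ! Suc h \<noteq> q''"
    show False
    proof (cases "VI k ! Suc h < q''")
      case True
      then show False using q''(5) q' by auto
    next
      case False
      then have lt: "q'' < VI k ! Suc h" using ne by simp
      have "q'' \<in> set (VI k)" using VI_set q''(2) rq'' by simp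
      then obtain j where j: "j < length (VI k)" "VI k ! j = q''" by (auto simp: in_set_conv_nth)
      have "h < j" using VI_less_iff[of h k j] j h q''(1) q_def by simp
      moreover have "j < Suc h" using VI_less_iff[OF j(1) h] j lt by simp
      ultimately show False by simp
    qed
  qed
  show ?thesis using nself eq rq'' q''(4) rt_nth[OF h] by simp
qed

lemma VI_ne: "1 \<le> k \<Longrightarrow> k \<le> n \<Longrightarrow> VI k \<noteq> []"
  using issue_exists[of k] VI_set[of _ k] by (metis empty_iff list.set(1) req.simps(1))

lemma VI_first:
  assumes k: "1 \<le> k" "k \<le> n"
  shows "ev (VI k ! 0) = Issue k"
proof -
  obtain q0 where q0: "q0 < len" "ev q0 = Issue k" using issue_exists[OF k] by blast
  have "q0 \<in> set (VI k)" using VI_set q0 by simp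
  then obtain j where j: "j < length (VI k)" "VI k ! j = q0" by (auto simp: in_set_conv_nth)
  have "j = 0"
  proof (rule ccontr)
    assume "j \<noteq> 0"
    then have "VI k ! 0 < q0" using VI_less[of 0 j k] j by simp
    moreover have "0 < length (VI k)" using j(1) by (rule le_less_trans[OF le0])
    moreover have m0: "VI k ! 0 < len" "rq (VI k ! 0) = k" using VI_mem[OF \<open>0 < length (VI k)\<close>] by auto
    moreover obtain q1 where "q1 \<le> VI k ! 0" "ev q1 = Issue k"
      using issue_before[OF m0] by blast
    ultimately show False using issue_unique[of q1 q0 k] q0 by simp
  qed
  then show ?thesis using j q0 by simp
qed

lemma VI_last:
  assumes k: "1 \<le> k" "k \<le> n"
  defines "q \<equiv> last (VI k)"
  shows "lnk (st q) (nq q) = nq q \<and> nq q = vr (k - 1)"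
proof -
  have ne: "VI k \<noteq> []" using VI_ne[OF k] .
  have qm: "q < len" "rq q = k" using VI_set[of q k] ne q_def by auto
  have max: "r \<le> q" if "r < len" "rq r = k" for r
  proof -
    have "r \<in> set (VI k)" using that VI_set by simp
    then obtain j where j: "j < length (VI k)" "VI k ! j = r" by (auto simp: in_set_conv_nth)
    have "q = VI k ! (length (VI k) - 1)" using ne q_def by (simp add: last_conv_nth)
    show ?thesis
    proof (cases "j = length (VI k) - 1")
      case True then show ?thesis using \<open>q = _\<close> j by simp
    next
      case False
      then have "j < length (VI k) - 1" using j by simp
      moreover have "length (VI k) - 1 < length (VI k)" using j by simp
      ultimately show ?thesis using VI_less[of j "length (VI k) - 1" k] j \<open>q = _\<close> by simp
    qed
  qed
  have self: "lnk (st q) (nq q) = nq q"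
  proof (rule ccontr)
    assume nself: "lnk (st q) (nq q) \<noteq> nq q"
    have msg: "(k, nq q, lnk (st q) (nq q), tm q) \<in> msgs (st (Suc q))" using fwd[OF qm(1) nself] qm by simp
    obtain q'' where q'': "Suc q \<le> q''" "q'' < len" "ev q'' = Recv k (lnk (st q) (nq q)) (nq q) (tm q'')"
      using recv_later[OF msg] qm(1) by (meson Suc_leI)
    have "rq q'' = k" by (subst q''(3), simp)
    then show False using max[OF q''(2)] q''(1) by simp
  qed
  have "L q (nq q) = k - 1" using queue_pred[OF qm(1) self] qm by simp
  moreover have "vr (L q (nq q)) = nq q" using InvD1[OF inv evV[OF qm(1)] self] qm(1) by simp
  ultimately show ?thesis using self by simp
qed

lemma rt_path:
  assumes k: "1 \<le> k" "k \<le> n"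
  shows "is_path E (rt k) (vr k) (vr (k - 1))"
proof -
  have ne: "VI k \<noteq> []" using VI_ne[OF k] .
  have "rt k \<noteq> []" using ne by (simp add: rt_def)
  moreover have "hd (rt k) = vr k"
    using VI_first[OF k] ne by (simp add: rt_def hd_map hd_conv_nth)
  moreover have "last (rt k) = vr (k - 1)"
    using VI_last[OF k] ne by (simp add: rt_def last_map)
  moreover have "distinct (rt k)"
    unfolding distinct_conv_nth
  proof (intro allI impI)
    fix i j assume ij: "i < length (rt k)" "j < length (rt k)" "i \<noteq> j"
    show "rt k ! i \<noteq> rt k ! j"
    proof
      assume eq: "rt k ! i = rt k ! j"
      have mi: "VI k ! i < len" "rq (VI k ! i) = k" and mj: "VI k ! j < len" "rq (VI k ! j) = k"
        using VI_mem ij rt_len by auto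
      have nq: "nq (VI k ! i) = nq (VI k ! j)" using eq rt_nth ij rt_len by simp
      show False
      proof (cases "i < j")
        case True
        then show False using visit_once[of "VI k ! i" "VI k ! j"] VI_less[of i j k] ij rt_len mi mj nq by simp
      next
        case False
        then have "j < i" using ij by simp
        then show False using visit_once[of "VI k ! j" "VI k ! i"] VI_less[of j i k] ij rt_len mi mj nq by simp
      qed
    qed
  qed
  moreover have "ch E (rt k)"
    unfolding ch_def
  proof (intro allI impI)
    fix h assume h: "Suc h < length (rt k)"
    then have h': "Suc h < length (VI k)" by (simp add: rt_len)
    let ?q = "VI k ! h"
    have "lnk (st ?q) (nq ?q) \<noteq> nq ?q" "rt k ! Suc h = lnk (st ?q) (nq ?q)" using VI_next[OF h'] by auto
    moreover have "?q < len" using VI_mem[of h k] h' by simp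
    ultimately show "E (rt k ! h) (rt k ! Suc h)"
      using InvD2[OF inv evV] rt_nth[of h k] h' by (simp add: less_imp_le)
  qed
  ultimately show ?thesis by (simp add: is_path_ch)
qed

lemma rt_tpath:
  assumes k: "1 \<le> k" "k \<le> n"
  shows "rt k = tpath E (vr k) (vr (k - 1))"
  using tpath_eq[OF _ _ rt_path[OF k]] nodes k by simp


definition T :: "nat \<Rightarrow> nat \<Rightarrow> real" where "T k h = tm (VI k ! h)"

lemma rt_V: "1 \<le> k \<Longrightarrow> k \<le> n \<Longrightarrow> set (rt k) \<subseteq> V"
  using rt_tpath tpath_set_V nodes by simp

lemma tdist_seg:
  assumes k: "1 \<le> k" "k \<le> n" and ab: "a \<le> b" "b < length (rt k)"
  shows "tdist E wt (rt k ! a) (rt k ! b) = wsum wt (take (Suc b - a) (drop a (rt k)))"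
  using segment_tpath[of "vr k" "vr (k - 1)" a b] nodes k ab rt_tpath[OF k] by (simp add: tdist_wsum)

lemma route_time:
  assumes k: "1 \<le> k" "k \<le> n" and hh: "h \<le> h'" "h' < length (rt k)"
  shows "T k h \<le> T k h' \<and> T k h' \<le> T k h + tdist E wt (rt k ! h) (rt k ! h')"
  using hh
proof (induction h' rule: dec_induct)
  case base
  have "rt k ! h \<in> V" using rt_V[OF k] base by auto
  then show ?case using tdist_refl by simp
next
  case (step h')
  let ?P = "rt k"
  have h's: "Suc h' < length (VI k)" using step by (simp add: rt_len)
  have IH: "T k h \<le> T k h'" "T k h' \<le> T k h + tdist E wt (?P ! h) (?P ! h')" using step by auto
  have mono: "T k h' \<le> T k (Suc h')"
    unfolding T_def using sorted_tm[of "VI k ! h'" "VI k ! Suc h'"] VI_less[OF _ h's, of h'] VI_mem[OF h's] by simp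
  have nxt: "T k (Suc h') \<le> T k h' + wt (?P ! h') (?P ! Suc h')"
    using VI_next[OF h's] rt_nth[of h' k] h's unfolding T_def by simp
  have d1: "tdist E wt (?P ! h) (?P ! Suc h') = tdist E wt (?P ! h) (?P ! h') + tdist E wt (?P ! h') (?P ! Suc h')"
  proof (rule tdist_add)
    show "?P ! h \<in> V" "?P ! Suc h' \<in> V" using rt_V[OF k] step by auto
    have "tpath E (?P ! h) (?P ! Suc h') = take (Suc (Suc h') - h) (drop h ?P)"
      using segment_tpath[of "vr k" "vr (k - 1)" h "Suc h'"] nodes k step rt_tpath[OF k] by simp
    moreover have "take (Suc (Suc h') - h) (drop h ?P) ! (h' - h) = ?P ! h'" using step by simp
    moreover have "h' - h < length (take (Suc (Suc h') - h) (drop h ?P))" using step by simp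
    ultimately show "?P ! h' \<in> set (tpath E (?P ! h) (?P ! Suc h'))" by (metis nth_mem)
  qed
  have d2: "tdist E wt (?P ! h') (?P ! Suc h') = wt (?P ! h') (?P ! Suc h')"
  proof -
    have "drop h' ?P = ?P ! h' # ?P ! Suc h' # drop (Suc (Suc h')) ?P"
      using step by (metis Cons_nth_drop_Suc Suc_lessD)
    then have "take (Suc (Suc h') - h') (drop h' ?P) = [?P ! h', ?P ! Suc h']"
      by (simp add: Suc_diff_le)
    then show ?thesis using tdist_seg[OF k, of h' "Suc h'"] step by simp
  qed
  show ?case using IH mono nxt d1 d2 by simp
qed

definition A :: "nat \<Rightarrow> 'v \<Rightarrow> real" where
  "A k u = T k (THE h. h < length (rt k) \<and> rt k ! h = u)"

lemma A_nth:
  assumes k: "1 \<le> k" "k \<le> n" and h: "h < length (rt k)"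
  shows "A k (rt k ! h) = T k h"
proof -
  have d: "distinct (rt k)" using rt_path[OF k] by (simp add: is_path_ch)
  have "(THE h'. h' < length (rt k) \<and> rt k ! h' = rt k ! h) = h"
    using d h by (auto simp: nth_eq_iff_index_eq)
  then show ?thesis by (simp add: A_def)
qed

lemma real_arr_eq:
  assumes k: "1 \<le> k" "k \<le> n"
  shows "real_arr evs vr tr k u = (if u \<in> set (rt k) then {A k u} else {})"
proof (intro set_eqI iffI)
  fix \<tau> assume "\<tau> \<in> real_arr evs vr tr k u"
  then consider (r) w where "Recv k u w \<tau> \<in> set evs" | (i) "u = vr k" "\<tau> = tr k"
    by (auto simp: real_arr_def split: if_splits)
  then show "\<tau> \<in> (if u \<in> set (rt k) then {A k u} else {})"
  proof cases
    case r
    then obtain q where q: "q < len" "ev q = Recv k u w \<tau>" by (auto simp: in_set_conv_nth)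
    then have "q \<in> set (VI k)" using VI_set by simp
    then obtain h where h: "h < length (VI k)" "VI k ! h = q" by (auto simp: in_set_conv_nth)
    have "rt k ! h = u" using rt_nth[OF h(1)] h q by simp
    moreover have "T k h = \<tau>" using h q by (simp add: T_def)
    ultimately show ?thesis using A_nth[OF k, of h] h rt_len by (metis nth_mem singletonI)
  next
    case i
    have ne: "VI k \<noteq> []" using VI_ne[OF k] .
    have "rt k ! 0 = vr k" using VI_first[OF k] ne rt_nth[of 0 k] by simp
    moreover have "T k 0 = tr k" using VI_first[OF k] by (simp add: T_def)
    moreover have "0 < length (rt k)" using ne by (simp add: rt_len)
    ultimately show ?thesis using A_nth[OF k, of 0] i by (metis nth_mem singletonI)
  qed
next
  fix \<tau> assume "\<tau> \<in> (if u \<in> set (rt k) then {A k u} else {})"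
  then have u: "u \<in> set (rt k)" "\<tau> = A k u" by (auto split: if_splits)
  then obtain h where h: "h < length (rt k)" "rt k ! h = u" by (auto simp: in_set_conv_nth)
  have hv: "h < length (VI k)" using h rt_len by simp
  let ?q = "VI k ! h"
  have q: "?q < len" "rq ?q = k" using VI_mem[OF hv] by auto
  have tau: "\<tau> = tm ?q" using u h A_nth[OF k h(1)] by (simp add: T_def)
  have nq: "nq ?q = u" using rt_nth[OF hv] h by simp
  show "\<tau> \<in> real_arr evs vr tr k u"
  proof (cases "ev ?q")
    case (Issue k')
    then show ?thesis using q nq tau by (auto simp: real_arr_def)
  next
    case (Recv k' u' w \<tau>')
    then have "Recv k u w \<tau> \<in> set evs" using q nq tau by (metis ev_time.simps(2) nd.simps(2) nth_mem req.simps(2))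
    then show ?thesis by (auto simp: real_arr_def)
  qed
qed

lemma A_order:
  assumes ij: "1 \<le> i" "i < j" "j \<le> n" and u: "u \<in> set (rt i)" "u \<in> set (rt j)"
  shows "A i u \<le> A j u"
proof -
  obtain h where h: "h < length (rt i)" "rt i ! h = u" using u by (auto simp: in_set_conv_nth)
  obtain h' where h': "h' < length (rt j)" "rt j ! h' = u" using u by (auto simp: in_set_conv_nth)
  have m1: "VI i ! h < len" "rq (VI i ! h) = i" using VI_mem h rt_len by auto
  have m2: "VI j ! h' < len" "rq (VI j ! h') = j" using VI_mem h' rt_len by auto
  have "nq (VI i ! h) = nq (VI j ! h')" using rt_nth h h' rt_len by auto
  then have "VI i ! h < VI j ! h'" using visit_order[OF m1(1) m2(1)] m1 m2 ij by simp
  then have "T i h \<le> T j h'" unfolding T_def using sorted_tm m2 by simp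
  then show ?thesis using A_nth[of i h] A_nth[of j h'] h h' ij by simp
qed

lemma A_route:
  assumes k: "1 \<le> k" "k \<le> n" and xy: "x \<in> set (rt k)" "y \<in> set (rt k)"
  shows "A k y \<le> A k x + tdist E wt x y"
proof -
  obtain a where a: "a < length (rt k)" "rt k ! a = x" using xy by (auto simp: in_set_conv_nth)
  obtain b where b: "b < length (rt k)" "rt k ! b = y" using xy by (auto simp: in_set_conv_nth)
  show ?thesis
  proof (cases "a \<le> b")
    case True
    then show ?thesis using route_time[OF k True b(1)] a b A_nth[OF k a(1)] A_nth[OF k b(1)] by simp
  next
    case False
    then have "T k b \<le> T k a" using route_time[OF k, of b a] a by simp
    moreover have "tdist E wt x y \<ge> 0" using tdist_nonneg[OF weights] rt_V[OF k] xy by auto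
    ultimately show ?thesis using a b A_nth[OF k a(1)] A_nth[OF k b(1)] by simp
  qed
qed

end

context arrow
begin

lemma core:
  assumes "1 \<le> i" "i < j" "j \<le> n" "x \<in> set (rt i)" "p \<in> set (rt j)"
  shows "A i x \<le> A j p + tdist E wt p x"
  using assms
proof (induction "j - i" arbitrary: i j x p rule: less_induct)
  case less
  have i: "1 \<le> i" "i \<le> n" and j: "1 \<le> j" "j \<le> n" using less.prems by auto
  have pV: "p \<in> V" using rt_V[OF j] less.prems by auto
  have xV: "x \<in> V" using rt_V[OF i] less.prems by auto
  have vV: "vr i \<in> V" "vr (i - 1) \<in> V" "vr j \<in> V" "vr (j - 1) \<in> V" using nodes i j by auto
  obtain x' where x': "x' \<in> set (rt i)" "\<forall>y\<in>set (rt i). x' \<in> set (tpath E p y)"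
    using gate[OF pV vV(1,2)] rt_tpath[OF i] by auto
  have x'V: "x' \<in> V" using rt_V[OF i] x' by auto
  have 1: "A i x \<le> A i x' + tdist E wt x' x" using A_route[OF i x'(1) less.prems(4)] .
  have 2: "tdist E wt p x = tdist E wt p x' + tdist E wt x' x"
    using tdist_add[OF pV xV] x'(2) less.prems(4) by blast
  have key: "A i x' \<le> A j p + tdist E wt p x'"
  proof (cases "x' \<in> set (rt j)")
    case True
    have "A i x' \<le> A j x'" using A_order[OF i(1) less.prems(2,3) x'(1) True] .
    also have "\<dots> \<le> A j p + tdist E wt p x'" using A_route[OF j less.prems(5) True] .
    finally show ?thesis .
  next
    case False
    define S where "S = {y \<in> V. x' \<notin> set (tpath E p y)}"
    have pj: "p \<in> set (tpath E (vr j) (vr (j - 1)))" using less.prems(5) rt_tpath[OF j] by simp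
    have "set (tpath E p (vr (j - 1))) \<subseteq> set (rt j)"
      using subpath[OF vV(3,4) pj tpath_end[OF vV(3,4)]] rt_tpath[OF j] by simp
    then have jS: "vr (j - 1) \<in> S" using False vV unfolding S_def by auto
    have "vr i \<in> set (rt i)" using tpath_start[OF vV(1,2)] rt_tpath[OF i] by simp
    then have iS: "vr i \<notin> S" using x'(2) unfolding S_def by auto
    define K where "K = {m. i \<le> m \<and> m \<le> j - 1 \<and> vr m \<notin> S}"
    have fK: "finite K" unfolding K_def by simp
    have iK: "i \<in> K" using iS less.prems unfolding K_def by auto
    define m0 where "m0 = Max K"
    have m0K: "m0 \<in> K" using Max_in[OF fK] iK unfolding m0_def by blast
    have m0max: "m \<le> m0" if "m \<in> K" for m using Max_ge[OF fK that] unfolding m0_def .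
    have m0lt: "m0 < j - 1" using m0K jS unfolding K_def by (cases "m0 = j - 1") auto
    define k where "k = Suc m0"
    have k: "i < k" "k < j" "1 \<le> k" "k \<le> n" using m0K m0lt less.prems unfolding k_def K_def by auto
    have kS: "vr k \<in> S"
    proof (rule ccontr)
      assume "vr k \<notin> S"
      then have "k \<in> K" using k m0lt unfolding K_def k_def by auto
      then show False using m0max unfolding k_def by fastforce
    qed
    have km: "k - 1 = m0" unfolding k_def by simp
    have m0S: "vr m0 \<notin> S" "vr m0 \<in> V" using m0K nodes k unfolding K_def k_def by auto
    have "x' \<in> set (tpath E p (vr m0))" using m0S unfolding S_def by auto
    moreover have "x' \<notin> set (tpath E p (vr k))" using kS unfolding S_def by auto
    moreover have "vr k \<in> V" using nodes k by auto
    ultimately have "x' \<in> set (tpath E (vr k) (vr m0))"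
      using tpath_union[OF pV _ m0S(2), of "vr k"] by auto
    then have x'k: "x' \<in> set (rt k)" using rt_tpath[of k] k km by simp
    have "A i x' \<le> A k x' + tdist E wt x' x'"
      using less.hyps[of k i x' x'] k less.prems x'(1) x'k by simp
    then have a1: "A i x' \<le> A k x'" using tdist_refl[OF x'V] by simp
    have a2: "A k x' \<le> A j p + tdist E wt p x'"
      using less.hyps[of j k x' p] k less.prems x'k by simp
    show ?thesis using a1 a2 by simp
  qed
  show ?case using 1 2 key by simp
qed

lemma final:
  assumes ij: "1 \<le> i" "i < j" "j \<le> n" and v: "v \<in> set (tpath E (vr i) (vr (i - 1)))"
  shows "tr i + Delta E wt evs vr tr i v \<le> tr j + Delta E wt evs vr tr j v"
proof -
  have i: "1 \<le> i" "i \<le> n" and j: "1 \<le> j" "j \<le> n" using ij by auto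
  have vi: "v \<in> set (rt i)" using v rt_tpath[OF i] by simp
  have lhs: "tr i + Delta E wt evs vr tr i v = A i v"
    using real_arr_eq[OF i, of v] vi by (simp add: Delta_def)
  show ?thesis
  proof (cases "v \<in> set (rt j)")
    case True
    have "tr j + Delta E wt evs vr tr j v = A j v"
      using real_arr_eq[OF j, of v] True by (simp add: Delta_def)
    moreover have "A i v \<le> A j v + tdist E wt v v" using core[OF ij vi True] .
    moreover have "tdist E wt v v = 0" using tdist_refl rt_V[OF i] vi by auto
    ultimately show ?thesis using lhs by simp
  next
    case False
    let ?F = "(\<lambda>p. A j p + tdist E wt p v) ` set (rt j)"
    have setq: "{Min (real_arr evs vr tr j p) + tdist E wt p v | p. real_arr evs vr tr j p \<noteq> {}} = ?F"
      using real_arr_eq[OF j] by (auto split: if_splits)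
    have rhs: "tr j + Delta E wt evs vr tr j v = Min ?F"
      using real_arr_eq[OF j, of v] False setq by (simp add: Delta_def)
    have ne: "rt j \<noteq> []" using rt_path[OF j] by (simp add: is_path_ch)
    have "Min ?F \<in> ?F" using ne by (intro Min_in) auto
    then obtain p where p: "p \<in> set (rt j)" "Min ?F = A j p + tdist E wt p v" by auto
    have "A i v \<le> A j p + tdist E wt p v" using core[OF ij vi p(1)] .
    then show ?thesis using lhs rhs p by simp
  qed
qed

end

theorem lemma13:
  fixes V :: "'v set" and E :: "'v \<Rightarrow> 'v \<Rightarrow> bool" and wt :: "'v \<Rightarrow> 'v \<Rightarrow> real"
    and v0 :: 'v and n :: nat and vr :: "nat \<Rightarrow> 'v" and tr :: "nat \<Rightarrow> real"
    and evs :: "'v event list" and \<sigma> :: "'v st" and i j :: nat and v :: 'v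
  assumes tree: "is_tree V E"
    and weights: "weighted E wt"
    and nodes: "\<forall>k\<le>n. vr k \<in> V"
    and dummy: "vr 0 = v0" "tr 0 = 0"
    and times: "\<forall>k\<le>n. tr k \<ge> 0"
    and exec: "arrow_exec E wt v0 n vr tr evs \<sigma>"
    and order: "\<forall>k. 1 \<le> k \<and> k \<le> n \<longrightarrow> prd \<sigma> k = Some (k - 1)"
    and ij: "1 \<le> i" "i < j" "j \<le> n"
    and v: "v \<in> set (tpath E (vr i) (vr (i - 1)))"
  shows "tr i + Delta E wt evs vr tr i v \<le> tr j + Delta E wt evs vr tr j v"
  proof -
  interpret arrow V E wt v0 n vr tr evs \<sigma>
    using tree weights nodes dummy exec order by unfold_locales (auto simp: tree_ctx_def)
  show ?thesis using final[OF ij v] .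
qed

end
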